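(* Let $\mu$ be a finite measure on $\mathbb{N}_+$ with $\mu(n)\sim b(\log n)^\alpha n^{-2}$ as $n\to\infty$ for constants $b>0,\alpha>0$. Then as $n\to\infty$, $$\mathcal{L}^f\Big(\frac{1}{\log\log(\cdot+10)}\Big)(n)\le-\frac{\Phi_\mu(n)}{(n+10)\log(n+10)(\log\log(n+10))^2}-\Big(2\log2-\frac12\Big)\frac{b(\log n)^{\alpha-1}}{(\log\log n)^2}+o\Big(\frac{(\log n)^{\alpha-1}}{(\log\log n)^2}\Big).$$
   Context: $\mathbb{N}_+=\{1,2,\dots\}$, $\mu(k):=\mu(\{k\})$, $\Phi_\mu(n)=n\sum_{k=1}^n k\mu(k)$. For $g:\mathbb{N}_+\to\mathbb{R}$ with $\sum_k|g(n+k)|\mu(k)<\infty$, the fragmentation operator is $\mathcal{L}^fg(n)=n\sum_{k=1}^\infty\mu(k)[g(n+k)-g(n)]$; here it is applied to $g(n)=1/\log\log(n+10)$. *)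

theory Defs
  imports "HOL-Analysis.Analysis" "HOL-Library.Landau_Symbols"
begin

text \<open>A finite measure on the positive integers is represented by its point masses
  mu k = mu({k}) for k \<ge> 1 (the value mu 0 is irrelevant and never used).\<close>

definition finite_measure_Npos :: "(nat \<Rightarrow> real) \<Rightarrow> bool" where
  "finite_measure_Npos mu \<longleftrightarrow> (\<forall>k\<ge>1. mu k \<ge> 0) \<and> summable (\<lambda>k. mu (Suc k))"

definition Phi :: "(nat \<Rightarrow> real) \<Rightarrow> nat \<Rightarrow> real" where
  "Phi mu n = real n * (\<Sum>k=1..n. real k * mu k)"

definition Lf :: "(nat \<Rightarrow> real) \<Rightarrow> (nat \<Rightarrow> real) \<Rightarrow> nat \<Rightarrow> real" where
  "Lf mu g n = real n * (\<Sum>j. mu (Suc j) * (g (n + Suc j) - g n))"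

definition gfun :: "nat \<Rightarrow> real" where
  "gfun n = 1 / ln (ln (real n + 10))"

end

theory Submission
  imports Defs "HOL-Real_Asymp.Real_Asymp"
begin

lemma ln_ge_quad:
  fixes x :: real assumes "x \<ge> 0" shows "x - x^2/2 \<le> ln (1+x)"
proof -
  let ?f = "\<lambda>t::real. ln (1+t) - t + t^2/2"
  have "?f 0 \<le> ?f x"
  proof (rule DERIV_nonneg_imp_increasing_open[OF assms])
    fix t :: real assume t: "0 < t" "t < x"
    have "DERIV ?f t :> (1/(1+t) - 1 + t)"
      using t by (auto intro!: derivative_eq_intros)
    moreover have "1/(1+t) - 1 + t \<ge> 0"
      using t by (simp add: field_simps)
    ultimately show "\<exists>y. DERIV ?f t :> y \<and> y \<ge> 0" by blast
  next
    show "continuous_on {0..x} ?f"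
      by (intro continuous_intros) auto
  qed
  then show ?thesis by simp
qed

lemma gdiff_bound:
  fixes N k :: real
  assumes N: "exp (exp 1) \<le> N" and k: "0 \<le> k"
  shows "1/ln(ln(N+k)) - 1/ln(ln N) \<le> - ln(1+k/N)/(ln N*(ln(ln N))^2) + 3/2*(ln(1+k/N))^2/((ln N)^2*(ln(ln N))^2)"
proof -
  have Npos: "N > 0" using N by (meson exp_gt_zero less_le_trans)
  define L where "L = ln N"
  have hL: "exp 1 \<le> L" unfolding L_def using N
    by (metis exp_gt_zero ln_exp ln_le_cancel_iff Npos)
  have Lpos: "L > 0" using hL by (meson exp_gt_zero less_le_trans)
  define \<Lambda> where "\<Lambda> = ln L"
  have h\<Lambda>: "1 \<le> \<Lambda>" unfolding \<Lambda>_def using hL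
    by (metis exp_gt_zero ln_exp ln_le_cancel_iff Lpos)
  define l where "l = ln (1 + k/N)"
  have l0: "l \<ge> 0" unfolding l_def using k Npos by simp
  have "N + k = N * (1 + k/N)" using Npos by (simp add: field_simps)
  hence lnNk: "ln (N+k) = L + l" unfolding L_def l_def using Npos k
    by (metis ln_mult add_pos_nonneg divide_nonneg_pos less_le zero_less_one)
  define u where "u = l / L"
  have u0: "u \<ge> 0" unfolding u_def using l0 Lpos by simp
  have "L + l = L * (1 + u)" unfolding u_def using Lpos by (simp add: field_simps)
  hence lnlnNk: "ln (ln (N+k)) = \<Lambda> + ln (1+u)" unfolding \<Lambda>_def using lnNk Lpos u0
    by (simp add: ln_mult)
  define v where "v = ln (1+u)"
  have v0: "v \<ge> 0" unfolding v_def using u0 by simp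
  have vu: "v \<le> u" unfolding v_def using u0 by (simp add: ln_add_one_self_le_self)
  have vl: "u - u^2/2 \<le> v" unfolding v_def using ln_ge_quad[OF u0] .
  have step1: "1/(\<Lambda>+v) - 1/\<Lambda> \<le> -(v/\<Lambda>^2) + v^2/\<Lambda>^3"
  proof -
    have bb: "\<Lambda> + v > 0" "\<Lambda> > 0" using h\<Lambda> v0 by auto
    have "1/(\<Lambda>+v) - 1/\<Lambda> - (-(v/\<Lambda>^2) + v^2/\<Lambda>^3) = - (v^3/(\<Lambda>^3*(\<Lambda>+v)))"
      using bb by (simp add: divide_simps) algebra
    moreover have "v^3/(\<Lambda>^3*(\<Lambda>+v)) \<ge> 0" using h\<Lambda> v0 by simp
    ultimately show ?thesis by linarith
  qed
  have step2: "-(v/\<Lambda>^2) + v^2/\<Lambda>^3 \<le> -(u/\<Lambda>^2) + 3/2*u^2/\<Lambda>^2"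
  proof -
    have "(u - u^2/2)/\<Lambda>^2 \<le> v/\<Lambda>^2" using vl h\<Lambda> by (simp add: divide_right_mono)
    hence a: "-(v/\<Lambda>^2) \<le> -((u - u^2/2)/\<Lambda>^2)" by linarith
    have "v^2 \<le> u^2" using v0 vu by (simp add: power_mono)
    hence "v^2/\<Lambda>^3 \<le> u^2/\<Lambda>^3" using h\<Lambda> by (simp add: divide_right_mono)
    also have "\<dots> \<le> u^2/\<Lambda>^2" using h\<Lambda>
      by (intro divide_left_mono) (auto simp: power_increasing)
    finally have b: "v^2/\<Lambda>^3 \<le> u^2/\<Lambda>^2" .
    have "-((u - u^2/2)/\<Lambda>^2) + u^2/\<Lambda>^2 = -(u/\<Lambda>^2) + 3/2*u^2/\<Lambda>^2"
      using h\<Lambda> by (simp add: divide_simps)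
    thus ?thesis using a b by linarith
  qed
  have "1/ln(ln(N+k)) - 1/ln(ln N) = 1/(\<Lambda>+v) - 1/\<Lambda>"
    using lnlnNk unfolding v_def \<Lambda>_def L_def by simp
  also have "\<dots> \<le> -(u/\<Lambda>^2) + 3/2*u^2/\<Lambda>^2" using step1 step2 by linarith
  also have "\<dots> = - l/(L*\<Lambda>^2) + 3/2*l^2/(L^2*\<Lambda>^2)"
    unfolding u_def by (simp add: field_simps power2_eq_square)
  finally show ?thesis unfolding l_def L_def \<Lambda>_def .
qed

definition Fz :: "real \<Rightarrow> real \<Rightarrow> real" where
  "Fz N x = ln (1 + x/N)/x + (ln (N+x) - ln x)/N"

lemma Fz_deriv:
  assumes "N > 0" "t > 0"
  shows "(Fz N has_real_derivative (- ln (1+t/N)/t^2)) (at t)"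
proof -
  have "(Fz N has_real_derivative
     ((1/N)/(1+t/N) * t - ln (1+t/N)) / t^2 + (1/(N+t) - 1/t)/N) (at t)"
    unfolding Fz_def using assms
    by (auto intro!: derivative_eq_intros simp: power2_eq_square add_pos_pos)
  moreover have "((1/N)/(1+t/N) * t - c) / t^2 + (1/(N+t) - 1/t)/N = - c/t^2" for c
  proof -
    have "(1/N)/(1+t/N) = 1/(N+t)" using assms by (simp add: divide_simps)
    moreover have "t/(N+t)/t^2 = 1/(t*(N+t))" using assms by (simp add: divide_simps power2_eq_square)
    moreover have "(1/(N+t) - 1/t)/N = -1/(t*(N+t))" using assms by (simp add: divide_simps)
    ultimately show ?thesis by (simp add: diff_divide_distrib)
  qed
  ultimately show ?thesis by simp
qed

lemma Fz_step:
  assumes N: "N > 0" and x: "x \<ge> 1"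
  shows "Fz N x - Fz N (x+1) \<le> ln (1+x/N)/x^2 + 1/(N*x^2)"
proof -
  obtain z where z: "x < z" "z < x+1" "Fz N (x+1) - Fz N x = ((x+1) - x) * (- ln (1+z/N)/z^2)"
  proof -
    have der: "\<And>t. x \<le> t \<Longrightarrow> t \<le> x+1 \<Longrightarrow> DERIV (Fz N) t :> (- ln (1+t/N)/t^2)"
      using Fz_deriv[OF N] x by simp
    have "\<exists>z. x < z \<and> z < x+1 \<and> Fz N (x+1) - Fz N x = ((x+1) - x) * (- ln (1+z/N)/z^2)"
      by (rule MVT2[where f' = "\<lambda>t. - ln (1+t/N)/t^2"]) (use der in auto)
    thus ?thesis using that by blast
  qed
  have zpos: "z > 0" using z x by simp
  have "Fz N x - Fz N (x+1) = ln (1+z/N)/z^2" using z by simp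
  also have "\<dots> \<le> ln (1+(x+1)/N)/z^2"
    using z N zpos x by (intro divide_right_mono) (auto simp: divide_right_mono add_pos_nonneg)
  also have "\<dots> \<le> ln (1+(x+1)/N)/x^2"
    using z N x by (intro divide_left_mono) (auto simp: power_mono add_pos_nonneg)
  also have "ln (1+(x+1)/N) \<le> ln (1+x/N) + 1/N"
  proof -
    have Nx: "N + x > 0" using N x by simp
    have "(1+x/N) * (1 + 1/(N+x)) = 1+(x+1)/N"
      using N Nx by (simp add: divide_simps)
    hence "ln (1+(x+1)/N) = ln ((1+x/N) * (1 + 1/(N+x)))" by simp
    also have "\<dots> = ln (1+x/N) + ln (1 + 1/(N+x))"
    proof -
      have p1: "1 + x/N > 0" using N x by (simp add: add_pos_nonneg)
      have p2: "1 + 1/(N+x) > 0" using Nx by (simp add: add_pos_pos)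
      show ?thesis by (rule ln_mult_pos[OF p1 p2])
    qed
    also have "ln (1 + 1/(N+x)) \<le> 1/(N+x)" using N x by (intro ln_add_one_self_le_self) simp
    also have "1/(N+x) \<le> 1/N" using N x by (simp add: frac_le)
    finally show ?thesis by simp
  qed
  hence "ln (1+(x+1)/N)/x^2 \<le> (ln (1+x/N) + 1/N)/x^2" using x by (simp add: divide_right_mono)
  also have "\<dots> = ln (1+x/N)/x^2 + 1/(N*x^2)" using N x by (simp add: field_simps)
  finally show ?thesis .
qed

lemma tail_inv_sq:
  assumes "n \<ge> 1"
  shows "(\<Sum>k=n+1..n+d. 1/(real k)^2) \<le> 1/real n - 1/real (n+d)"
proof (induction d)
  case 0 thus ?case by simp
next
  case (Suc d)
  define a where "a = real (n+d)"
  have a1: "a \<ge> 1" unfolding a_def using assms by simp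
  have "1/(a+1)^2 \<le> 1/(a*(a+1))" using a1
    by (intro divide_left_mono) (auto simp: power2_eq_square)
  also have "\<dots> = 1/a - 1/(a+1)" using a1 by (simp add: field_simps)
  finally have h: "1/(a+1)^2 \<le> 1/a - 1/(a+1)" .
  have e: "real (n + Suc d) = a + 1" unfolding a_def by simp
  have "(\<Sum>k=n+1..n+Suc d. 1/(real k)^2) = (\<Sum>k=n+1..n+d. 1/(real k)^2) + 1/(real (n+Suc d))^2"
    by simp
  also have "\<dots> \<le> 1/real n - 1/a + 1/(a+1)^2" using Suc unfolding e a_def by (simp add: inverse_eq_divide)
  finally have X: "(\<Sum>k=n+1..n+Suc d. 1/(real k)^2) \<le> 1/real n - 1/a + 1/(a+1)^2" .
  show ?case unfolding e using X h by linarith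
qed

lemma Fz_sum:
  assumes N: "N > 0" and n: "n \<ge> 1"
  shows "Fz N (real n + 1) - Fz N (real (n+d) + 1) - 1/(N*real n)
     \<le> (\<Sum>k=n+1..n+d. ln (1 + real k/N)/(real k)^2)"
proof -
  have "(\<Sum>k=n+1..n+d. Fz N (real k) - Fz N (real k + 1) - 1/N * (1/(real k)^2))
      \<le> (\<Sum>k=n+1..n+d. ln (1 + real k/N)/(real k)^2)"
  proof (rule sum_mono)
    fix k assume "k \<in> {n+1..n+d}"
    hence k: "real k \<ge> 1" using n by simp
    show "Fz N (real k) - Fz N (real k + 1) - 1/N * (1/(real k)^2) \<le> ln (1 + real k/N)/(real k)^2"
      using Fz_step[OF N k] by simp
  qed
  moreover have "(\<Sum>k=n+1..n+d. Fz N (real k) - Fz N (real k + 1) - 1/N * (1/(real k)^2))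
      = (\<Sum>k=n+1..n+d. Fz N (real k) - Fz N (real k + 1)) - 1/N * (\<Sum>k=n+1..n+d. 1/(real k)^2)"
    by (simp add: sum_subtractf sum_distrib_left)
  moreover have "(\<Sum>k=n+1..n+d. Fz N (real k) - Fz N (real k + 1)) = Fz N (real n + 1) - Fz N (real (n+d) + 1)"
  proof -
    have "(\<Sum>k=n+1..n+d. (\<lambda>i. - Fz N (real i)) (Suc k) - (\<lambda>i. - Fz N (real i)) k)
        = (\<lambda>i. - Fz N (real i)) (Suc (n+d)) - (\<lambda>i. - Fz N (real i)) (n+1)"
      by (rule sum_Suc_diff) simp
    thus ?thesis by (simp add: add.commute)
  qed
  moreover have "1/N * (\<Sum>k=n+1..n+d. 1/(real k)^2) \<le> 1/(N*real n)"
  proof -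
    have "0 \<le> 1/real (n+d)" by simp
    hence "(\<Sum>k=n+1..n+d. 1/(real k)^2) \<le> 1/real n" using tail_inv_sq[OF n, of d] by linarith
    hence "1/N * (\<Sum>k=n+1..n+d. 1/(real k)^2) \<le> 1/N * (1/real n)" using N
      by (intro mult_left_mono) auto
    thus ?thesis by simp
  qed
  ultimately show ?thesis by linarith
qed

lemma gfun_pos: "gfun x > 0"
proof -
  have "exp 1 < real x + 10" using exp_le by linarith
  hence "1 < ln (real x + 10)" by (metis exp_gt_zero ln_exp ln_less_cancel_iff less_trans)
  thus ?thesis unfolding gfun_def by simp
qed

lemma gfun_mono: assumes "a \<le> b" shows "gfun b \<le> gfun a"
proof -
  have "exp 1 < real a + 10" using exp_le by linarith
  hence "1 < ln (real a + 10)" by (metis exp_gt_zero ln_exp ln_less_cancel_iff less_trans)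
  hence p: "0 < ln (ln (real a + 10))" by simp
  have "ln (real a + 10) \<le> ln (real b + 10)" using assms by simp
  hence "ln (ln (real a + 10)) \<le> ln (ln (real b + 10))" using \<open>1 < ln (real a + 10)\<close> by simp
  thus ?thesis unfolding gfun_def using p by (simp add: frac_le)
qed

lemma Lf_trunc:
  assumes fm: "finite_measure_Npos mu"
  shows "Lf mu gfun n \<le> real n * (\<Sum>k=1..m. mu k * (gfun (n+k) - gfun n))"
proof -
  define t where "t j = mu (Suc j) * (gfun (n + Suc j) - gfun n)" for j
  have mu0: "mu (Suc j) \<ge> 0" for j using fm unfolding finite_measure_Npos_def by auto
  have musum: "summable (\<lambda>j. mu (Suc j))" using fm unfolding finite_measure_Npos_def by auto
  have tle: "t j \<le> 0" for j unfolding t_def using mu0[of j] gfun_mono[of n "n + Suc j"]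
    by (simp add: mult_nonneg_nonpos)
  have tabs: "norm (t j) \<le> mu (Suc j) * gfun n" for j
  proof -
    have "0 \<le> gfun n - gfun (n + Suc j)" using gfun_mono[of n "n + Suc j"] by simp
    moreover have "gfun n - gfun (n + Suc j) \<le> gfun n" using gfun_pos[of "n + Suc j"] by simp
    ultimately show ?thesis unfolding t_def using mu0[of j]
      by (simp add: abs_mult mult_left_mono)
  qed
  have ts: "summable t"
    by (rule summable_comparison_test'[OF summable_mult2[OF musum], of 0]) (use tabs in auto)
  have "suminf t = (\<Sum>j. t (j + m)) + (\<Sum>j<m. t j)" by (rule suminf_split_initial_segment[OF ts])
  moreover have "(\<Sum>j. t (j + m)) \<le> (\<Sum>j::nat. (0::real))"
    by (rule suminf_le) (use tle ts in auto)
  ultimately have "suminf t \<le> (\<Sum>j<m. t j)" by simp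
  also have "(\<Sum>j<m. t j) = (\<Sum>k=1..m. mu k * (gfun (n+k) - gfun n))"
    unfolding t_def by (simp add: sum.atLeast1_atMost_eq)
  finally have "suminf t \<le> (\<Sum>k=1..m. mu k * (gfun (n+k) - gfun n))" .
  hence "real n * suminf t \<le> real n * (\<Sum>k=1..m. mu k * (gfun (n+k) - gfun n))"
    by (intro mult_left_mono) auto
  thus ?thesis unfolding Lf_def t_def by simp
qed

lemma lin_aux2:
  fixes A P R S X :: real
  assumes "A \<le> P" "R \<le> S" "X = -P + 3/2*R"
  shows "X \<le> -A + 3/2*S"
  using assms by linarith

lemma partI_pt:
  fixes c L x l m :: real
  assumes "c \<ge> 0" "L > 0" "m \<ge> 0" "x - x^2/2 \<le> l" "l \<le> x" "0 \<le> l"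
  shows "m * (-(c*l) + 3/2*((c/L)*l^2)) \<le> m * (-(c*x) + c*x^2*(1/2 + 3/(2*L)))"
proof (rule mult_left_mono[OF _ assms(3)])
  have a: "c*(x - x^2/2) \<le> c*l" using assms by (intro mult_left_mono) auto
  have "l^2 \<le> x^2" using assms by (intro power_mono) auto
  hence b: "(c/L)*l^2 \<le> (c/L)*x^2" using assms by (intro mult_left_mono) auto
  have e: "-(c*(x - x^2/2)) + 3/2*((c/L)*x^2) = -(c*x) + c*x^2*(1/2 + 3/(2*L))"
    using assms by (simp add: field_simps)
  have "-(c*l) + 3/2*((c/L)*l^2) \<le> -(c*(x - x^2/2)) + 3/2*((c/L)*x^2)"
    by (rule lin_aux2[OF a b refl])
  thus "-(c*l) + 3/2*((c/L)*l^2) \<le> -(c*x) + c*x^2*(1/2 + 3/(2*L))"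
    using e by simp
qed

lemma partII_pt:
  fixes c L l m lo hi B :: real
  assumes "c \<ge> 0" "L > 0" "0 \<le> l" "l \<le> B" "lo \<le> m" "m \<le> hi" "0 \<le> m"
  shows "m * (-(c*l) + 3/2*((c/L)*l^2)) \<le> -(c*lo*l) + 3/2*((c/L)*hi*B^2)"
proof -
  have a: "c*lo*l \<le> c*m*l" using assms by (intro mult_right_mono mult_left_mono) auto
  have "l^2 \<le> B^2" using assms by (intro power_mono) auto
  hence "m*l^2 \<le> m*B^2" using assms by (intro mult_left_mono) auto
  also have "\<dots> \<le> hi*B^2" using assms by (intro mult_right_mono) auto
  finally have "(c/L)*(m*l^2) \<le> (c/L)*(hi*B^2)" using assms by (intro mult_left_mono) auto
  hence b: "(c/L)*m*l^2 \<le> (c/L)*hi*B^2" by (simp add: mult.assoc)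
  have "m * (-(c*l) + 3/2*((c/L)*l^2)) = -(c*m*l) + 3/2*((c/L)*m*l^2)" by (simp add: algebra_simps)
  thus ?thesis by (rule lin_aux2[OF a b])
qed

lemma key_bound:
  fixes mu :: "nat \<Rightarrow> real" and b \<alpha> e1 :: real and n k0 M :: nat
  assumes fm: "finite_measure_Npos mu" and b: "b > 0" and \<alpha>: "\<alpha> > 0" and e1: "0 < e1" "e1 < 1"
    and M: "M \<ge> 1"
    and up: "\<And>k. k \<ge> k0 \<Longrightarrow> mu k \<le> (1+e1) * (b * ln (real k) powr \<alpha> / (real k)^2)"
    and lo: "\<And>k. k \<ge> k0 \<Longrightarrow> (1-e1) * (b * ln (real k) powr \<alpha> / (real k)^2) \<le> mu k"
    and n: "n \<ge> k0" "n \<ge> 3" and nbig: "exp (exp 1) \<le> real n + 10"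
  shows "Lf mu gfun n \<le> - Phi mu n / ((real n + 10) * ln (real n + 10) * (ln (ln (real n + 10)))^2)
     + real n / ((real n + 10)^2 * ln (real n + 10) * (ln (ln (real n + 10)))^2) * (1/2 + 3/(2*ln (real n + 10))) * (\<Sum>k=1..n. mu k * (real k)^2)
     - (1-e1) * b * ln (real n) powr \<alpha> * (real n / (ln (real n + 10) * (ln (ln (real n + 10)))^2))
         * (Fz (real n + 10) (real n + 1) - Fz (real n + 10) (real (M*n) + 1) - 1/((real n + 10) * real n))
     + (1+e1) * b * ln (real (M*n)) powr \<alpha> * (3/2 * (ln (1 + real M))^2 / ((ln (real n + 10))^2 * (ln (ln (real n + 10)))^2))"
proof -
  define N where "N = real n + 10"
  define L where "L = ln N"
  define LL where "LL = ln L"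
  have Npos: "N > 0" unfolding N_def by simp
  have nbig': "exp (exp 1) \<le> N" using nbig unfolding N_def .
  have hL: "exp 1 \<le> L" unfolding L_def using nbig' Npos
    by (metis exp_gt_zero ln_exp ln_le_cancel_iff)
  have Lpos: "L > 0" using hL by (meson exp_gt_zero less_le_trans)
  have hLL: "1 \<le> LL" unfolding LL_def using hL Lpos
    by (metis exp_gt_zero ln_exp ln_le_cancel_iff)
  have LLpos: "LL > 0" using hLL by simp
  have mu0: "mu k \<ge> 0" if "k \<ge> 1" for k using fm that unfolding finite_measure_Npos_def by auto
  define l where "l k = ln (1 + real k / N)" for k
  define c where "c = real n / (L * LL^2)"
  have c0: "c \<ge> 0" unfolding c_def using Lpos LLpos by simp
  define Q where "Q k = -(c * l k) + 3/2 * ((c/L) * (l k)^2)" for k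
  have l0: "l k \<ge> 0" for k unfolding l_def using Npos by simp
  have A: "Lf mu gfun n \<le> (\<Sum>k=1..M*n. mu k * Q k)"
  proof -
    have "Lf mu gfun n \<le> real n * (\<Sum>k=1..M*n. mu k * (gfun (n+k) - gfun n))"
      by (rule Lf_trunc[OF fm])
    also have "\<dots> = (\<Sum>k=1..M*n. mu k * (real n * (gfun (n+k) - gfun n)))"
      by (simp add: sum_distrib_left algebra_simps)
    also have "\<dots> \<le> (\<Sum>k=1..M*n. mu k * Q k)"
    proof (rule sum_mono)
      fix k assume "k \<in> {1..M*n}"
      hence k1: "k \<ge> 1" by simp
      have "gfun (n+k) - gfun n = 1/ln(ln(N + real k)) - 1/ln(ln N)"
        unfolding gfun_def N_def by (simp add: algebra_simps)
      also have "\<dots> \<le> - l k/(L*LL^2) + 3/2*(l k)^2/(L^2*LL^2)"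
        using gdiff_bound[OF nbig', of "real k"] unfolding l_def L_def LL_def by simp
      finally have "real n * (gfun (n+k) - gfun n) \<le> real n * (- l k/(L*LL^2) + 3/2*(l k)^2/(L^2*LL^2))"
        by (intro mult_left_mono) auto
      also have "\<dots> = Q k" unfolding Q_def c_def using Lpos LLpos
        by (simp add: field_simps power2_eq_square)
      finally show "mu k * (real n * (gfun (n+k) - gfun n)) \<le> mu k * Q k"
        using mu0[OF k1] by (intro mult_left_mono) auto
    qed
    finally show ?thesis .
  qed
  have split: "(\<Sum>k=1..M*n. mu k * Q k) = (\<Sum>k=1..n. mu k * Q k) + (\<Sum>k=n+1..n+(M*n-n). mu k * Q k)"
  proof -
    have "M*n = n + (M*n - n)" using M by simp
    hence "(\<Sum>k=1..M*n. mu k * Q k) = (\<Sum>k=1..n+(M*n-n). mu k * Q k)" by simp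
    also have "\<dots> = (\<Sum>k=1..n. mu k * Q k) + (\<Sum>k=n+1..n+(M*n-n). mu k * Q k)"
      by (rule sum.ub_add_nat) simp
    finally show ?thesis .
  qed
  have PI: "(\<Sum>k=1..n. mu k * Q k) \<le> - Phi mu n / (N * L * LL^2)
      + real n / (N^2 * L * LL^2) * (1/2 + 3/(2*L)) * (\<Sum>k=1..n. mu k * (real k)^2)"
  proof -
    have "(\<Sum>k=1..n. mu k * Q k) \<le> (\<Sum>k=1..n. mu k * (-(c*(real k/N)) + c*(real k/N)^2*(1/2 + 3/(2*L))))"
    proof (rule sum_mono)
      fix k assume k: "k \<in> {1..n}"
      have x0: "real k / N \<ge> 0" using Npos by simp
      show "mu k * Q k \<le> mu k * (-(c*(real k/N)) + c*(real k/N)^2*(1/2 + 3/(2*L)))"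
        unfolding Q_def
        by (rule partI_pt[OF c0 Lpos mu0]) (use k ln_ge_quad[OF x0] ln_add_one_self_le_self[OF x0] l0 in \<open>auto simp: l_def\<close>)
    qed
    also have "\<dots> = (\<Sum>k=1..n. -(c/N) * (real k * mu k) + c/N^2*(1/2 + 3/(2*L)) * (mu k * (real k)^2))"
      by (rule sum.cong) (use Npos in \<open>auto simp: field_simps power2_eq_square\<close>)
    also have "\<dots> = -(c/N) * (\<Sum>k=1..n. real k * mu k) + c/N^2*(1/2 + 3/(2*L)) * (\<Sum>k=1..n. mu k * (real k)^2)"
      unfolding sum.distrib sum_distrib_left ..
    also have "-(c/N) * (\<Sum>k=1..n. real k * mu k) = - Phi mu n / (N * L * LL^2)"
      unfolding Phi_def c_def by (simp add: field_simps)
    also have "c/N^2 = real n / (N^2 * L * LL^2)" unfolding c_def by (simp add: field_simps)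
    finally show ?thesis .
  qed
  define d where "d = M*n - n"
  have nd: "n + d = M*n" unfolding d_def using M by simp
  have PII: "(\<Sum>k=n+1..n+d. mu k * Q k) \<le>
      - ((1-e1) * b * ln (real n) powr \<alpha> * c * (Fz N (real n + 1) - Fz N (real (M*n) + 1) - 1/(N * real n)))
      + (1+e1) * b * ln (real (M*n)) powr \<alpha> * (3/2 * (ln (1 + real M))^2 / (L^2 * LL^2))"
  proof -
    define lo' where "lo' = (1-e1) * b * ln (real n) powr \<alpha>"
    define hi' where "hi' = (1+e1) * b * ln (real (M*n)) powr \<alpha>"
    define B where "B = ln (1 + real M)"
    have lo'0: "lo' \<ge> 0" unfolding lo'_def using e1 b by simp
    have "(\<Sum>k=n+1..n+d. mu k * Q k) \<le> (\<Sum>k=n+1..n+d. -(c*(lo'/(real k)^2)*l k) + 3/2*((c/L)*(hi'/(real k)^2)*B^2))"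
    proof (rule sum_mono)
      fix k assume k: "k \<in> {n+1..n+d}"
      have kk0: "k \<ge> k0" and k1: "k \<ge> 1" and kn: "k > n" and kM: "k \<le> M*n" using k n nd by auto
      have lnk: "ln (real n) \<le> ln (real k)" using kn n by simp
      have lnn0: "0 \<le> ln (real n)" using n by simp
      have "lo'/(real k)^2 \<le> (1-e1) * (b * ln (real k) powr \<alpha> / (real k)^2)"
      proof -
        have "ln (real n) powr \<alpha> \<le> ln (real k) powr \<alpha>" using lnk lnn0 \<alpha> by (intro powr_mono2) auto
        thus ?thesis unfolding lo'_def using e1 b by (simp add: divide_right_mono mult_left_mono)
      qed
      also have "\<dots> \<le> mu k" by (rule lo[OF kk0])
      finally have m1: "lo'/(real k)^2 \<le> mu k" .
      have "mu k \<le> (1+e1) * (b * ln (real k) powr \<alpha> / (real k)^2)" by (rule up[OF kk0])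
      also have "\<dots> \<le> hi'/(real k)^2"
      proof -
        have r: "real k \<le> real (M*n)" using kM by (simp only: of_nat_le_iff)
        have "ln (real k) \<le> ln (real (M*n))" by (rule ln_mono) (use r k1 in auto)
        moreover have "0 \<le> ln (real k)" using k1 by simp
        ultimately have "ln (real k) powr \<alpha> \<le> ln (real (M*n)) powr \<alpha>" using \<alpha> by (intro powr_mono2) auto
        thus ?thesis unfolding hi'_def using e1 b by (simp add: divide_right_mono mult_left_mono)
      qed
      finally have m2: "mu k \<le> hi'/(real k)^2" .
      have lB: "l k \<le> B"
      proof -
        have "real k \<le> real M * real n" using kM by (simp add: of_nat_mult[symmetric] del: of_nat_mult)
        also have "\<dots> \<le> real M * N" unfolding N_def by (intro mult_left_mono) auto
        finally have "real k / N \<le> real M" using Npos by (simp add: divide_le_eq mult.commute)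
        hence "1 + real k / N \<le> 1 + real M" by simp
        moreover have "0 < 1 + real k / N" using Npos by (simp add: add_pos_nonneg)
        ultimately show ?thesis unfolding l_def B_def by (rule ln_mono)
      qed
      show "mu k * Q k \<le> -(c*(lo'/(real k)^2)*l k) + 3/2*((c/L)*(hi'/(real k)^2)*B^2)"
        unfolding Q_def by (rule partII_pt[OF c0 Lpos l0 lB m1 m2 mu0[OF k1]])
    qed
    also have "\<dots> = -(c*lo') * (\<Sum>k=n+1..n+d. l k/(real k)^2) + 3/2*(c/L)*hi'*B^2 * (\<Sum>k=n+1..n+d. 1/(real k)^2)"
    proof -
      have "(\<Sum>k=n+1..n+d. -(c*(lo'/(real k)^2)*l k) + 3/2*((c/L)*(hi'/(real k)^2)*B^2))
          = (\<Sum>k=n+1..n+d. -(c*lo') * (l k/(real k)^2) + 3/2*(c/L)*hi'*B^2 * (1/(real k)^2))"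
        by (rule sum.cong) (auto simp: field_simps)
      also have "\<dots> = -(c*lo') * (\<Sum>k=n+1..n+d. l k/(real k)^2) + 3/2*(c/L)*hi'*B^2 * (\<Sum>k=n+1..n+d. 1/(real k)^2)"
        unfolding sum.distrib sum_distrib_left ..
      finally show ?thesis .
    qed
    also have "\<dots> \<le> -(c*lo') * (Fz N (real n + 1) - Fz N (real (M*n) + 1) - 1/(N * real n)) + 3/2*(c/L)*hi'*B^2 * (1/real n)"
    proof -
      have n1: "n \<ge> 1" using n by simp
      have "Fz N (real n + 1) - Fz N (real (M*n) + 1) - 1/(N * real n) \<le> (\<Sum>k=n+1..n+d. l k/(real k)^2)"
        using Fz_sum[OF Npos n1, of d] unfolding l_def nd .
      hence a: "-(c*lo') * (\<Sum>k=n+1..n+d. l k/(real k)^2) \<le> -(c*lo') * (Fz N (real n + 1) - Fz N (real (M*n) + 1) - 1/(N * real n))"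
        using c0 lo'0 by (simp add: mult_left_mono)
      have "0 \<le> 1/real (n+d)" by simp
      hence "(\<Sum>k=n+1..n+d. 1/(real k)^2) \<le> 1/real n" using tail_inv_sq[OF n1, of d] by linarith
      moreover have "0 \<le> 3/2*(c/L)*hi'*B^2" unfolding hi'_def using c0 Lpos e1 b by simp
      ultimately have "3/2*(c/L)*hi'*B^2 * (\<Sum>k=n+1..n+d. 1/(real k)^2) \<le> 3/2*(c/L)*hi'*B^2 * (1/real n)"
        by (intro mult_left_mono) auto
      thus ?thesis using a by linarith
    qed
    also have "3/2*(c/L)*hi'*B^2 * (1/real n) = hi' * (3/2 * B^2 / (L^2 * LL^2))"
      unfolding c_def using n Lpos LLpos by (simp add: field_simps power2_eq_square)
    finally show ?thesis unfolding lo'_def hi'_def B_def by (simp add: algebra_simps)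
  qed
  have "Lf mu gfun n \<le> - Phi mu n / (N * L * LL^2)
      + real n / (N^2 * L * LL^2) * (1/2 + 3/(2*L)) * (\<Sum>k=1..n. mu k * (real k)^2)
      - (1-e1) * b * ln (real n) powr \<alpha> * c * (Fz N (real n + 1) - Fz N (real (M*n) + 1) - 1/(N * real n))
      + (1+e1) * b * ln (real (M*n)) powr \<alpha> * (3/2 * (ln (1 + real M))^2 / (L^2 * LL^2))"
    using A split PI PII unfolding d_def by linarith
  thus ?thesis unfolding LL_def L_def N_def c_def .
qed

lemma prod3_le:
  fixes r1 r2 r3 U :: real
  assumes "0 \<le> r1" "r1 \<le> 1" "0 \<le> r2" "r2 \<le> 1" "0 \<le> r3" "r3 \<le> 1" "0 \<le> U"
  shows "r1^2 * r2 * r3^2 * U \<le> U"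
proof -
  have "r1^2 \<le> 1" using assms by (simp add: power_le_one)
  moreover have "r3^2 \<le> 1" using assms by (simp add: power_le_one)
  ultimately have "r1^2 * r2 * r3^2 \<le> 1" using assms
    by (metis mult_le_one zero_le_power2 mult_nonneg_nonneg)
  thus ?thesis using assms by (metis mult_left_le_one_le mult.commute zero_le_power2 mult_nonneg_nonneg)
qed

lemma lim_R:
  fixes M :: nat assumes M: "M \<ge> 1"
  shows "((\<lambda>n. (ln (real n) / ln (real n + 10)) * (ln (ln (real n)) / ln (ln (real n + 10)))^2 *
      (real n * (Fz (real n + 10) (real n + 1) - Fz (real n + 10) (real (M*n) + 1) - 1/((real n + 10) * real n))))
     \<longlongrightarrow> 1 * 1^2 * (2 * ln 2 - (ln (1 + real M) * inverse (real M) + (ln (1 + real M) - ln (real M))) - 0)) at_top"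
proof -
  have l1: "((\<lambda>n::nat. ln (real n) / ln (real n + 10)) \<longlongrightarrow> 1) at_top" by real_asymp
  have l2: "((\<lambda>n::nat. ln (ln (real n)) / ln (ln (real n + 10))) \<longlongrightarrow> 1) at_top" by real_asymp
  have l3: "((\<lambda>n::nat. real n * Fz (real n + 10) (real n + 1)) \<longlongrightarrow> 2 * ln 2) at_top"
    unfolding Fz_def by real_asymp
  have Mpos: "real M > 0" using M by simp
  have l4: "((\<lambda>n::nat. real n * Fz (real n + 10) (real (M*n) + 1)) \<longlongrightarrow>
      ln (1 + real M) * inverse (real M) + (ln (1 + real M) - ln (real M))) at_top"
  proof -
    define m where "m = real M"
    have "m > 0" using Mpos unfolding m_def .
    hence "((\<lambda>n::nat. real n * (ln (1 + (m * real n + 1)/(real n + 10)) / (m*real n + 1) + (ln (real n + 10 + (m*real n + 1)) - ln (m*real n + 1)) / (real n + 10)))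
        \<longlongrightarrow> ln (1 + m) * inverse m + (ln (1 + m) - ln m)) at_top" by real_asymp
    thus ?thesis unfolding Fz_def m_def by simp
  qed
  have l5: "((\<lambda>n::nat. real n * (1/((real n + 10) * real n))) \<longlongrightarrow> 0) at_top" by real_asymp
  have "((\<lambda>n. (ln (real n) / ln (real n + 10)) * (ln (ln (real n)) / ln (ln (real n + 10)))^2 *
      (real n * Fz (real n + 10) (real n + 1) - real n * Fz (real n + 10) (real (M*n) + 1) - real n * (1/((real n + 10) * real n))))
     \<longlongrightarrow> 1 * 1^2 * (2 * ln 2 - (ln (1 + real M) * inverse (real M) + (ln (1 + real M) - ln (real M))) - 0)) at_top"
    by (intro tendsto_intros l1 l2 l3 l4 l5)
  thus ?thesis by (simp add: algebra_simps)
qed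

lemma main_eps:
  fixes mu :: "nat \<Rightarrow> real" and b \<alpha> \<epsilon> :: real
  assumes fm: "finite_measure_Npos mu" and b: "b > 0" and \<alpha>: "\<alpha> > 0"
    and asy: "mu \<sim>[at_top] (\<lambda>n. b * ln (real n) powr \<alpha> / (real n)\<^sup>2)"
    and eps: "\<epsilon> > 0"
  shows "eventually (\<lambda>n. Lf mu gfun n
      + Phi mu n / ((real n + 10) * ln (real n + 10) * (ln (ln (real n + 10)))^2)
      + (2 * ln 2 - 1/2) * (b * ln (real n) powr (\<alpha> - 1) / (ln (ln (real n)))^2)
      \<le> \<epsilon> * (b * ln (real n) powr (\<alpha> - 1) / (ln (ln (real n)))^2)) at_top"
proof -
  define e1 where "e1 = min (\<epsilon>/16) (1/4)"
  have e1: "0 < e1" "e1 \<le> 1/4" "e1 \<le> \<epsilon>/16" unfolding e1_def using eps by auto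
  have "((\<lambda>m::nat. ln (1 + real m) * inverse (real m) + (ln (1 + real m) - ln (real m))) \<longlongrightarrow> 0) at_top"
    by real_asymp
  hence "eventually (\<lambda>m::nat. ln (1 + real m) * inverse (real m) + (ln (1 + real m) - ln (real m)) < \<epsilon>/4) at_top"
    using eps by (intro order_tendstoD) auto
  then obtain m0 where m0: "\<And>m. m \<ge> m0 \<Longrightarrow> ln (1 + real m) * inverse (real m) + (ln (1 + real m) - ln (real m)) < \<epsilon>/4"
    unfolding eventually_at_top_linorder by blast
  define M where "M = max m0 1"
  have M1: "M \<ge> 1" unfolding M_def by simp
  define GM where "GM = ln (1 + real M) * inverse (real M) + (ln (1 + real M) - ln (real M))"
  have GM: "GM \<le> \<epsilon>/4" unfolding GM_def M_def using m0[of "max m0 1"] by simp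
  define w where "w k = b * ln (real k) powr \<alpha> / (real k)\<^sup>2" for k :: nat
  have mu0: "mu k \<ge> 0" if "k \<ge> 1" for k using fm that unfolding finite_measure_Npos_def by auto
  have w0: "w k \<ge> 0" for k unfolding w_def using b by simp
  have ev1: "eventually (\<lambda>k. norm (mu k) \<le> (1+e1) * norm (w k)) at_top"
    using asymp_equiv_imp_eventually_le[OF asy[folded w_def], of "1+e1"] e1 by simp
  have ev2: "eventually (\<lambda>k. norm (mu k) \<ge> (1-e1) * norm (w k)) at_top"
    using asymp_equiv_imp_eventually_ge[OF asy[folded w_def], of "1-e1"] e1 by simp
  obtain k1 where k1: "\<And>k. k \<ge> k1 \<Longrightarrow> norm (mu k) \<le> (1+e1) * norm (w k) \<and> norm (mu k) \<ge> (1-e1) * norm (w k)"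
    using eventually_conj[OF ev1 ev2] unfolding eventually_at_top_linorder by blast
  define k0 where "k0 = max k1 1"
  have up: "mu k \<le> (1+e1) * (b * ln (real k) powr \<alpha> / (real k)^2)" if "k \<ge> k0" for k
  proof -
    have a: "k \<ge> k1" "k \<ge> 1" using that unfolding k0_def by auto
    have "mu k \<le> (1+e1) * w k" using k1[OF a(1)] mu0[OF a(2)] w0[of k] by simp
    thus ?thesis unfolding w_def .
  qed
  have lo: "(1-e1) * (b * ln (real k) powr \<alpha> / (real k)^2) \<le> mu k" if "k \<ge> k0" for k
  proof -
    have a: "k \<ge> k1" "k \<ge> 1" using that unfolding k0_def by auto
    have "(1-e1) * w k \<le> mu k" using k1[OF a(1)] mu0[OF a(2)] w0[of k] by simp
    thus ?thesis unfolding w_def .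
  qed
  define K0 where "K0 = (\<Sum>k=1..k0. mu k * (real k)^2)"
  have K0: "K0 \<ge> 0" unfolding K0_def by (intro sum_nonneg) (auto intro!: mult_nonneg_nonneg mu0)
  define R where "R n = (ln (real n) / ln (real n + 10)) * (ln (ln (real n)) / ln (ln (real n + 10)))^2 *
      (real n * (Fz (real n + 10) (real n + 1) - Fz (real n + 10) (real (M*n) + 1) - 1/((real n + 10) * real n)))" for n
  define X where "X = 2 * ln 2 - GM - e1"
  define B where "B = ln (1 + real M)"
  define CF where "CF = 3/2 * (1+e1) * 2 powr \<alpha> * B^2"
  have evR: "eventually (\<lambda>n. R n > X) at_top"
  proof -
    have "(R \<longlongrightarrow> 1 * 1^2 * (2 * ln 2 - GM - 0)) at_top"
      unfolding R_def GM_def by (rule lim_R[OF M1])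
    hence "(R \<longlongrightarrow> 2 * ln 2 - GM) at_top" by simp
    thus ?thesis unfolding X_def using e1 by (intro order_tendstoD) auto
  qed
  have evC: "eventually (\<lambda>n::nat. 3/(2*ln (real n + 10)) < e1) at_top"
  proof -
    have "((\<lambda>n::nat. 3/(2*ln (real n + 10))) \<longlongrightarrow> 0) at_top" by real_asymp
    thus ?thesis using e1 by (intro order_tendstoD) auto
  qed
  have evF: "eventually (\<lambda>n::nat. CF * (1/ln (real n + 10)) < e1) at_top"
  proof -
    have "((\<lambda>n::nat. 1/ln (real n + 10)) \<longlongrightarrow> 0) at_top" by real_asymp
    hence "((\<lambda>n::nat. CF * (1/ln (real n + 10))) \<longlongrightarrow> CF * 0) at_top" by (intro tendsto_intros)
    thus ?thesis using e1 by (intro order_tendstoD) auto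
  qed
  have evD: "eventually (\<lambda>n::nat. K0 / real n < e1 * b) at_top"
  proof -
    have "((\<lambda>n::nat. K0 / real n) \<longlongrightarrow> 0) at_top" by (rule lim_const_over_n)
    thus ?thesis using e1 b by (intro order_tendstoD) auto
  qed
  have evA: "eventually (\<lambda>n::nat. n \<ge> max (max k0 M) (max 16 (nat \<lceil>exp (exp (1::real))\<rceil>))) at_top"
    by (rule eventually_ge_at_top)
  have evAll: "eventually (\<lambda>n::nat. n \<ge> max (max k0 M) (max 16 (nat \<lceil>exp (exp (1::real))\<rceil>))
      \<and> 3/(2*ln (real n + 10)) < e1 \<and> K0 / real n < e1 * b \<and> CF * (1/ln (real n + 10)) < e1 \<and> R n > X) at_top"
    by (intro eventually_conj evA evC evD evF evR)
  show ?thesis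
  proof (rule eventually_mono[OF evAll])
    fix n :: nat
    assume H: "n \<ge> max (max k0 M) (max 16 (nat \<lceil>exp (exp (1::real))\<rceil>))
      \<and> 3/(2*ln (real n + 10)) < e1 \<and> K0 / real n < e1 * b \<and> CF * (1/ln (real n + 10)) < e1 \<and> R n > X"
    have nk0: "n \<ge> k0" and nM: "n \<ge> M" and n16: "n \<ge> 16" using H by auto
    have n3: "n \<ge> 3" using n16 by simp
    have "exp (exp 1) \<le> real n" using H by simp
    hence nbig: "exp (exp 1) \<le> real n + 10" by simp
    have hC: "3/(2*ln (real n + 10)) < e1" and hD: "K0 / real n < e1 * b"
      and hF: "CF * (1/ln (real n + 10)) < e1" and hR: "R n > X" using H by auto
    have e1lt: "e1 < 1" using e1 by simp
    note KB = key_bound[OF fm b \<alpha> e1(1) e1lt M1 up lo nk0 n3 nbig]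
    show "Lf mu gfun n
      + Phi mu n / ((real n + 10) * ln (real n + 10) * (ln (ln (real n + 10)))^2)
      + (2 * ln 2 - 1/2) * (b * ln (real n) powr (\<alpha> - 1) / (ln (ln (real n)))^2)
      \<le> \<epsilon> * (b * ln (real n) powr (\<alpha> - 1) / (ln (ln (real n)))^2)"
    proof -
      define N where "N = real n + 10"
      define L where "L = ln N"
      define LL where "LL = ln L"
      define lnn where "lnn = ln (real n)"
      define lln where "lln = ln lnn"
      define pa where "pa = lnn powr \<alpha>"
      define pa1 where "pa1 = lnn powr (\<alpha> - 1)"
      define U where "U = pa1 / lln^2"
      define T where "T = b * U"
      define S2 where "S2 = (\<Sum>k=1..n. mu k * (real k)^2)"
      define F where "F = Fz N (real n + 1) - Fz N (real (M*n) + 1) - 1/(N * real n)"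
      have Npos: "N > 0" unfolding N_def by simp
      have lnn1: "lnn > 1"
      proof -
        have "exp 1 < real n" using exp_le n16 by linarith
        thus ?thesis unfolding lnn_def by (metis exp_gt_zero ln_exp ln_less_cancel_iff less_trans)
      qed
      have lln0: "lln > 0" unfolding lln_def using lnn1 by simp
      have LgE: "lnn \<le> L" unfolding lnn_def L_def N_def using n16 by simp
      have Lpos: "L > 0" using LgE lnn1 by simp
      have LLgE: "lln \<le> LL" unfolding lln_def LL_def using LgE lnn1 by simp
      have LLpos: "LL > 0" using LLgE lln0 by simp
      have pa_eq: "pa = pa1 * lnn"
      proof -
        have "lnn powr ((\<alpha>-1)+1) = lnn powr (\<alpha>-1) * lnn powr 1" by (rule powr_add)
        thus ?thesis unfolding pa_def pa1_def using lnn1 by simp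
      qed
      have pa1_ge: "1/lnn \<le> pa1"
      proof -
        have "lnn powr (-1) \<le> lnn powr (\<alpha> - 1)" using \<alpha> lnn1 by (intro powr_mono) auto
        thus ?thesis unfolding pa1_def using lnn1 by (simp add: powr_minus divide_inverse)
      qed
      have pa1_0: "pa1 \<ge> 0" unfolding pa1_def by simp
      have U0: "U \<ge> 0" unfolding U_def using pa1_0 by simp
      have T0: "T \<ge> 0" unfolding T_def using U0 b by simp
      define r1 where "r1 = real n / N"
      define r2 where "r2 = lnn / L"
      define r3 where "r3 = lln / LL"
      have r1: "0 \<le> r1" "r1 \<le> 1" unfolding r1_def N_def by auto
      have r2: "0 \<le> r2" "r2 \<le> 1" unfolding r2_def using LgE lnn1 Lpos by auto
      have r3: "0 \<le> r3" "r3 \<le> 1" unfolding r3_def using LLgE lln0 LLpos by auto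
      have nr: "real n > 0" using n16 by simp
      have S2b: "S2 \<le> K0 + (1+e1) * b * real n * pa"
      proof -
        have "k0 \<le> k0 + 1" by simp
        have spl: "S2 = K0 + (\<Sum>k=k0+1..k0+(n-k0). mu k * (real k)^2)"
        proof -
          have "S2 = (\<Sum>k=1..k0+(n-k0). mu k * (real k)^2)" unfolding S2_def using nk0 by simp
          also have "\<dots> = K0 + (\<Sum>k=k0+1..k0+(n-k0). mu k * (real k)^2)"
            unfolding K0_def by (rule sum.ub_add_nat) simp
          finally show ?thesis .
        qed
        have "(\<Sum>k=k0+1..k0+(n-k0). mu k * (real k)^2) \<le> real (card {k0+1..k0+(n-k0)}) * ((1+e1) * b * pa)"
        proof (rule sum_bounded_above)
          fix k assume k: "k \<in> {k0+1..k0+(n-k0)}"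
          hence kk: "k \<ge> k0" "k \<le> n" "k \<ge> 1" using nk0 by auto
          have "mu k * (real k)^2 \<le> (1+e1) * (b * ln (real k) powr \<alpha> / (real k)^2) * (real k)^2"
            using up[OF kk(1)] by (intro mult_right_mono) auto
          also have "\<dots> = (1+e1) * b * ln (real k) powr \<alpha>" using kk by (simp add: field_simps)
          also have "\<dots> \<le> (1+e1) * b * pa"
          proof -
            have "ln (real k) \<le> lnn" unfolding lnn_def using kk by simp
            hence "ln (real k) powr \<alpha> \<le> pa" unfolding pa_def using kk \<alpha> by (intro powr_mono2) auto
            thus ?thesis using e1 b by (intro mult_left_mono) auto
          qed
          finally show "mu k * (real k)^2 \<le> (1+e1) * b * pa" .
        qed
        also have "\<dots> \<le> real n * ((1+e1) * b * pa)"
          using e1 b by (intro mult_right_mono) (auto simp: pa_def)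
        finally show ?thesis using spl by (simp add: mult.assoc mult.left_commute)
      qed
      define q where "q = real n / (N^2 * L * LL^2)"
      define h where "h = 1/2 + 3/(2*L)"
      have q0: "q \<ge> 0" unfolding q_def using Lpos by simp
      have h0: "0 \<le> h" "h \<le> 1/2 + e1" unfolding h_def using Lpos hC unfolding L_def N_def by auto
      have qid1: "q * (real n * pa) = r1^2 * r2 * r3^2 * U"
        unfolding q_def r1_def r2_def r3_def U_def pa_eq using Npos Lpos LLpos lln0 lnn1
        by (simp add: field_simps power2_eq_square)
      have qid2: "q * K0 = r1^2 * r2 * r3^2 * ((K0 / real n) / (lnn * lln^2))"
        unfolding q_def r1_def r2_def r3_def using Npos Lpos LLpos lln0 lnn1 nr
        by (simp add: field_simps power2_eq_square)
      have T1a: "q * K0 \<le> e1 * T"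
      proof -
        have K0n: "K0 / real n \<ge> 0" using K0 nr by simp
        have "q * K0 \<le> (K0 / real n) / (lnn * lln^2)"
          unfolding qid2 by (rule prod3_le[OF r1 r2 r3]) (use K0 nr lnn1 lln0 in simp)
        also have "\<dots> \<le> (e1 * b) / (lnn * lln^2)"
          using hD lnn1 lln0 by (intro divide_right_mono) auto
        also have "\<dots> = e1 * b * ((1/lnn) / lln^2)" by simp
        also have "\<dots> \<le> e1 * b * (pa1 / lln^2)"
          using pa1_ge e1 b lln0 by (intro mult_left_mono divide_right_mono) auto
        finally show ?thesis unfolding T_def U_def by simp
      qed
      have T1: "q * h * S2 \<le> e1 * T + (1/2 + e1) * (1 + e1) * T"
      proof -
        have "q * h * S2 \<le> q * h * (K0 + (1+e1) * b * real n * pa)"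
          using S2b q0 h0 by (intro mult_left_mono) auto
        also have "\<dots> = h * (q * K0) + h * (1+e1) * b * (q * (real n * pa))" by (simp add: algebra_simps)
        also have "h * (q * K0) \<le> 1 * (e1 * T)"
          by (rule mult_mono) (use T1a h0 e1 q0 K0 in auto)
        also have "h * (1+e1) * b * (q * (real n * pa)) \<le> (1/2 + e1) * (1+e1) * b * U"
        proof -
          have "q * (real n * pa) \<le> U" unfolding qid1 by (rule prod3_le[OF r1 r2 r3 U0])
          moreover have "h * (1+e1) * b \<le> (1/2 + e1) * (1+e1) * b" using h0 e1 b by (intro mult_right_mono) auto
          ultimately show ?thesis using h0 e1 b U0 q0 by (intro mult_mono) (auto simp: pa_def)
        qed
        finally show ?thesis unfolding T_def by (simp add: algebra_simps)
      qed
      have Rid: "b * pa * (real n / (L * LL^2)) * F = T * R n"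
        unfolding R_def T_def U_def F_def pa_eq lnn_def[symmetric] lln_def[symmetric] N_def[symmetric] L_def[symmetric] LL_def[symmetric]
        using Lpos LLpos lln0 lnn1 by (simp add: field_simps power2_eq_square)
      have T2: "(1-e1) * T * X \<le> (1-e1) * b * pa * (real n / (L * LL^2)) * F"
      proof -
        have "(1-e1) * (T * X) \<le> (1-e1) * (T * R n)"
          using hR T0 e1 by (intro mult_left_mono) auto
        moreover have "(1-e1)*b*pa*(real n/(L*LL^2))*F = (1-e1)*(b*pa*(real n/(L*LL^2))*F)"
          by (simp only: mult.assoc)
        moreover have "(1-e1) * T * X = (1-e1) * (T * X)" by (simp only: mult.assoc)
        ultimately show ?thesis unfolding Rid by simp
      qed
      have T3: "(1+e1) * b * ln (real (M*n)) powr \<alpha> * (3/2 * B^2 / (L^2 * LL^2)) \<le> e1 * T"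
      proof -
        have Mr: "real M \<ge> 1" using M1 by simp
        have "ln (real (M*n)) = ln (real M) + lnn" unfolding lnn_def using Mr nr by (simp add: ln_mult)
        also have "\<dots> \<le> 2 * lnn" using nM Mr unfolding lnn_def by simp
        finally have a: "ln (real (M*n)) \<le> 2 * lnn" .
        have a0: "0 \<le> ln (real (M*n))" using Mr nr
          by (metis ln_ge_zero of_nat_1 of_nat_le_iff mult_eq_0_iff not_less_eq_eq le_0_eq less_one nat_mult_1 one_le_mult_iff M1 n16 Suc_le_eq zero_less_numeral less_le_trans)
        have "ln (real (M*n)) powr \<alpha> \<le> (2 * lnn) powr \<alpha>" using a a0 \<alpha> by (intro powr_mono2) auto
        also have "\<dots> = 2 powr \<alpha> * pa" unfolding pa_def using lnn1 by (simp add: powr_mult)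
        finally have pM: "ln (real (M*n)) powr \<alpha> \<le> 2 powr \<alpha> * pa" .
        have pid: "pa / (L^2 * LL^2) = r1^0 * r2 * r3^2 * U / L"
          unfolding r2_def r3_def U_def pa_eq using Lpos LLpos lln0 lnn1 by (simp add: field_simps power2_eq_square)
        have pU: "pa / (L^2 * LL^2) \<le> U / L"
        proof -
          have "r1^0 * r2 * r3^2 * U \<le> U"
            using prod3_le[OF _ _ r2 r3 U0, of 1] by simp
          thus ?thesis unfolding pid using Lpos by (simp add: divide_right_mono)
        qed
        have "(1+e1) * b * ln (real (M*n)) powr \<alpha> * (3/2 * B^2 / (L^2 * LL^2))
            = (3/2 * (1+e1) * b * B^2) * ln (real (M*n)) powr \<alpha> / (L^2 * LL^2)" by (simp add: field_simps)
        also have "\<dots> \<le> (3/2 * (1+e1) * b * B^2) * (2 powr \<alpha> * pa) / (L^2 * LL^2)"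
          using pM e1 b by (intro divide_right_mono mult_left_mono) auto
        also have "\<dots> = (3/2 * (1+e1) * b * B^2 * 2 powr \<alpha>) * (pa / (L^2 * LL^2))" by (simp add: field_simps)
        also have "\<dots> \<le> (3/2 * (1+e1) * b * B^2 * 2 powr \<alpha>) * (U / L)"
          using pU e1 b by (intro mult_left_mono) auto
        also have "\<dots> = (CF * (1/L)) * T" unfolding CF_def T_def by (simp add: field_simps)
        also have "\<dots> \<le> e1 * T" using hF T0 unfolding L_def N_def by (intro mult_right_mono) auto
        finally show ?thesis .
      qed
      have KB': "Lf mu gfun n \<le> - Phi mu n / (N * L * LL^2) + q * h * S2
          - (1-e1) * b * pa * (real n / (L * LL^2)) * F
          + (1+e1) * b * ln (real (M*n)) powr \<alpha> * (3/2 * B^2 / (L^2 * LL^2))"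
        using KB unfolding q_def h_def S2_def F_def LL_def L_def N_def pa_def lnn_def B_def by simp
      have main: "Lf mu gfun n + Phi mu n / (N * L * LL^2) \<le> e1 * T + (1/2 + e1) * (1 + e1) * T - (1-e1) * T * X + e1 * T"
        using KB' T1 T2 T3 by linarith
      have coef: "e1 + (1/2 + e1) * (1 + e1) - (1-e1) * X + e1 + (2 * ln 2 - 1/2) \<le> \<epsilon>"
      proof -
        have eq: "e1 + (1/2 + e1) * (1 + e1) - (1-e1) * X + e1 + (2 * ln 2 - 1/2) = 9/2 * e1 + 2 * (e1 * ln 2) + GM * (1 - e1)"
          unfolding X_def by (simp add: algebra_simps, simp add: field_simps)
        have "e1 * ln 2 \<le> e1 * 1" using ln_2_less_1 e1 by (intro mult_left_mono) auto
        moreover have "GM * (1 - e1) \<le> (\<epsilon>/4) * (1 - e1)" using GM e1 by (intro mult_right_mono) auto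
        moreover have "(\<epsilon>/4) * (1 - e1) \<le> \<epsilon>/4" using eps e1 by (simp add: algebra_simps)
        ultimately show ?thesis unfolding eq using e1 by linarith
      qed
      have "Lf mu gfun n + Phi mu n / (N * L * LL^2) + (2 * ln 2 - 1/2) * T
          \<le> (e1 + (1/2 + e1) * (1 + e1) - (1-e1) * X + e1 + (2 * ln 2 - 1/2)) * T"
        using main by (simp add: algebra_simps)
      also have "\<dots> \<le> \<epsilon> * T" using coef T0 by (intro mult_right_mono) auto
      finally have fin: "Lf mu gfun n + Phi mu n / (N * L * LL^2) + (2 * ln 2 - 1/2) * T \<le> \<epsilon> * T" .
      have Teq: "T = b * ln (real n) powr (\<alpha> - 1) / (ln (ln (real n)))^2"
        unfolding T_def U_def pa1_def lnn_def lln_def by simp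
      show ?thesis using fin unfolding Teq N_def L_def LL_def .
    qed
  qed
qed

theorem lemma5p2:
  fixes mu :: "nat \<Rightarrow> real" and b \<alpha> :: real
  assumes "finite_measure_Npos mu"
    and "b > 0" and "\<alpha> > 0"
    and "mu \<sim>[at_top] (\<lambda>n. b * ln (real n) powr \<alpha> / (real n)\<^sup>2)"
  shows "\<exists>e. e \<in> o(\<lambda>n. ln (real n) powr (\<alpha> - 1) / (ln (ln (real n)))\<^sup>2) \<and>
    (\<forall>\<^sub>F n in at_top. Lf mu gfun n \<le>
        - Phi mu n / ((real n + 10) * ln (real n + 10) * (ln (ln (real n + 10)))\<^sup>2)
        - (2 * ln 2 - 1/2) * (b * ln (real n) powr (\<alpha> - 1) / (ln (ln (real n)))\<^sup>2)
        + e n)"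
proof -
  define e where "e n = max 0 (Lf mu gfun n
      + Phi mu n / ((real n + 10) * ln (real n + 10) * (ln (ln (real n + 10)))^2)
      + (2 * ln 2 - 1/2) * (b * ln (real n) powr (\<alpha> - 1) / (ln (ln (real n)))^2))" for n
  have "e \<in> o(\<lambda>n. ln (real n) powr (\<alpha> - 1) / (ln (ln (real n)))\<^sup>2)"
  proof (rule landau_o.smallI)
    fix c :: real assume c: "c > 0"
    have cb: "c / b > 0" using c assms(2) by simp
    note ev1 = main_eps[OF assms(1,2,3,4) cb]
    have ev2: "eventually (\<lambda>n::nat. n \<ge> 16) at_top" by (rule eventually_ge_at_top)
    show "eventually (\<lambda>n. norm (e n) \<le> c * norm (ln (real n) powr (\<alpha> - 1) / (ln (ln (real n)))\<^sup>2)) at_top"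
      using eventually_conj[OF ev1 ev2]
    proof (rule eventually_mono)
      fix n :: nat
      assume H: "Lf mu gfun n
      + Phi mu n / ((real n + 10) * ln (real n + 10) * (ln (ln (real n + 10)))^2)
      + (2 * ln 2 - 1/2) * (b * ln (real n) powr (\<alpha> - 1) / (ln (ln (real n)))^2)
      \<le> c / b * (b * ln (real n) powr (\<alpha> - 1) / (ln (ln (real n)))^2) \<and> n \<ge> 16"
      define T0 where "T0 = ln (real n) powr (\<alpha> - 1) / (ln (ln (real n)))\<^sup>2"
      have T0: "T0 \<ge> 0" unfolding T0_def by simp
      have eq: "c / b * (b * ln (real n) powr (\<alpha> - 1) / (ln (ln (real n)))^2) = c * T0"
        unfolding T0_def using assms(2) by simp
      have "e n \<le> c * T0" unfolding e_def using H eq c T0 by auto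
      moreover have "e n \<ge> 0" unfolding e_def by simp
      ultimately show "norm (e n) \<le> c * norm (ln (real n) powr (\<alpha> - 1) / (ln (ln (real n)))\<^sup>2)"
        using T0 unfolding T0_def by simp
    qed
  qed
  moreover have "\<forall>\<^sub>F n in at_top. Lf mu gfun n \<le>
        - Phi mu n / ((real n + 10) * ln (real n + 10) * (ln (ln (real n + 10)))\<^sup>2)
        - (2 * ln 2 - 1/2) * (b * ln (real n) powr (\<alpha> - 1) / (ln (ln (real n)))\<^sup>2)
        + e n"
    by (rule always_eventually) (auto simp: e_def)
  ultimately show ?thesis by blast
qed

end
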